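(* For any $0<p<\frac{1}{2}$ and any confidence threshold $0<\delta<\frac{1}{2}$, there exists an adaptive Las Vegas noisy binary search algorithm for any linear order such that, when the target is drawn from a probability distribution $\mu$ that is given to the algorithm as input, after an expected number of $$\frac{1}{I(p)}\left(H(\mu)+\mathcal{O}(H_2(\mu))+\mathcal{O}(\log\delta^{-1})\right)$$ queries it returns the target correctly with probability at least $1-\delta$.
   Context: Noisy binary search model: the search space is a linear order $\{1,\dots,n\}$ containing an unknown target $v^*$. In each step the algorithm chooses an element $q$ and asks a comparison query, whose correct answer is "$<$" if $v^*<q$ and "$>$" otherwise. Each answer is, independently, incorrect (the opposite answer) with probability $p$ and correct with probability $1-p$. The algorithm is adaptive; in the Las Vegas setting the number of queries is random and the bound is on its expectation (over $\mu$ and the noise). $H(\mu)=\sum_x\mu(x)\log_2\frac{1}{\mu(x)}$, $H_2(\mu)=\sum_x\mu(x)\log_2\log_2\frac{1}{\mu(x)}$, $H(p)=-p\log_2 p-(1-p)\log_2(1-p)$ and $I(p)=1-H(p)$. *)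

theory Defs
  imports Complex_Main "HOL-Library.Extended_Nonnegative_Real"
begin

text \<open>An adaptive (deterministic) search strategy, for a fixed instance, maps the
history of received answers to the next action: ask a comparison query at an
element q, or stop and return an element x.  An answer True means "<"
(i.e. the target is smaller than q), False means ">".\<close>

datatype action = Ask nat | Answer nat

definition is_Ask :: "action \<Rightarrow> bool" where
  "is_Ask a = (case a of Ask _ \<Rightarrow> True | Answer _ \<Rightarrow> False)"

definition correct_answer :: "nat \<Rightarrow> nat \<Rightarrow> bool" where
  "correct_answer v q = (v < q)"

text \<open>Probability (under noise rate p, target v) that the run of strategy S
produces exactly the answer history h (as a prefix of the run); it is 0 if S
stops before having received all answers of h.\<close>
definition prob_hist :: "real \<Rightarrow> (bool list \<Rightarrow> action) \<Rightarrow> nat \<Rightarrow> bool list \<Rightarrow> real" where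
  "prob_hist p S v h =
     (\<Prod>i<length h. (case S (take i h) of
         Ask q \<Rightarrow> (if h ! i = correct_answer v q then 1 - p else p)
       | Answer x \<Rightarrow> 0))"

definition prob_more_than :: "real \<Rightarrow> (bool list \<Rightarrow> action) \<Rightarrow> nat \<Rightarrow> nat \<Rightarrow> real" where
  "prob_more_than p S v k =
     (\<Sum>h\<in>{h::bool list. length h = k}. if is_Ask (S h) then prob_hist p S v h else 0)"

text \<open>Expected number of queries (tail-sum formula; equals \<infinity> if the strategy
fails to terminate with positive probability).\<close>
definition expected_queries :: "real \<Rightarrow> (bool list \<Rightarrow> action) \<Rightarrow> nat \<Rightarrow> ennreal" where
  "expected_queries p S v = (\<Sum>k. ennreal (prob_more_than p S v k))"

definition success_prob :: "real \<Rightarrow> (bool list \<Rightarrow> action) \<Rightarrow> nat \<Rightarrow> ennreal" where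
  "success_prob p S v =
     (\<Sum>k. ennreal (\<Sum>h\<in>{h::bool list. length h = k}.
                       if S h = Answer v then prob_hist p S v h else 0))"

text \<open>Entropies (base 2), with the convention 0 log(1/0) = 0 built into Isabelle's log.\<close>
definition entropy :: "nat \<Rightarrow> (nat \<Rightarrow> real) \<Rightarrow> real" where
  "entropy n \<mu> = (\<Sum>x\<in>{1..n}. \<mu> x * log 2 (1 / \<mu> x))"

definition entropy2 :: "nat \<Rightarrow> (nat \<Rightarrow> real) \<Rightarrow> real" where
  "entropy2 n \<mu> = (\<Sum>x\<in>{1..n}. \<mu> x * log 2 (log 2 (1 / \<mu> x)))"

definition bin_entropy :: "real \<Rightarrow> real" where
  "bin_entropy p = - p * log 2 p - (1 - p) * log 2 (1 - p)"

definition capacity :: "real \<Rightarrow> real" where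
  "capacity p = 1 - bin_entropy p"

end

theory Submission
  imports Defs
begin

definition upd :: "real \<Rightarrow> nat \<Rightarrow> bool \<Rightarrow> (nat \<Rightarrow> real) \<Rightarrow> nat \<Rightarrow> real" where
  "upd p q b w x = w x * (if b = (x < q) then 1 - p else p)"

definition Wt :: "nat \<Rightarrow> (nat \<Rightarrow> real) \<Rightarrow> real" where
  "Wt n w = (\<Sum>x\<in>{1..n}. w x)"

definition med :: "nat \<Rightarrow> (nat \<Rightarrow> real) \<Rightarrow> nat" where
  "med n w = (LEAST m. Wt n w \<le> 2 * (\<Sum>x\<in>{1..m}. w x))"

definition qry :: "nat \<Rightarrow> (nat \<Rightarrow> real) \<Rightarrow> nat" where
  "qry n w = (if (\<Sum>x\<in>{1..<med n w}. w x) \<le> (\<Sum>x\<in>{med n w<..n}. w x) \<and> med n w < n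
              then med n w + 1 else med n w)"

definition wt :: "real \<Rightarrow> nat \<Rightarrow> (nat \<Rightarrow> real) \<Rightarrow> bool list \<Rightarrow> nat \<Rightarrow> real" where
  "wt p n \<mu> h = foldl (\<lambda>w b. upd p (qry n w) b w) \<mu> h"

definition stops :: "real \<Rightarrow> nat \<Rightarrow> (nat \<Rightarrow> real) \<Rightarrow> bool" where
  "stops \<delta> n w = (\<exists>x\<in>{1..n}. (1 - \<delta>) * Wt n w \<le> w x)"

definition alg :: "real \<Rightarrow> real \<Rightarrow> nat \<Rightarrow> (nat \<Rightarrow> real) \<Rightarrow> bool list \<Rightarrow> action" where
  "alg p \<delta> n \<mu> h = (if stops \<delta> n (wt p n \<mu> h)
      then Answer (LEAST x. x \<in> {1..n} \<and> (1 - \<delta>) * Wt n (wt p n \<mu> h) \<le> wt p n \<mu> h x)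
      else Ask (qry n (wt p n \<mu> h)))"

definition reach :: "(bool list \<Rightarrow> action) \<Rightarrow> bool list \<Rightarrow> bool" where
  "reach S h = (\<forall>i<length h. is_Ask (S (take i h)))"

lemma wt_Nil[simp]: "wt p n \<mu> [] = \<mu>"
  by (simp add: wt_def)

lemma wt_snoc[simp]: "wt p n \<mu> (h @ [b]) = upd p (qry n (wt p n \<mu> h)) b (wt p n \<mu> h)"
  by (simp add: wt_def)

lemma reach_Nil[simp]: "reach S []"
  by (simp add: reach_def)

lemma reach_snoc: "reach S (h @ [b]) = (reach S h \<and> is_Ask (S h))"
  unfolding reach_def
  by (auto simp: less_Suc_eq nth_append)

lemma prob_hist_snoc:
  "prob_hist p S v (h @ [b]) = prob_hist p S v h *
     (case S h of Ask q \<Rightarrow> (if b = correct_answer v q then 1 - p else p) | Answer x \<Rightarrow> 0)"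
proof -
  define g where "g = (\<lambda>i. (case S (take i (h@[b])) of
         Ask q \<Rightarrow> (if (h@[b]) ! i = correct_answer v q then 1 - p else p)
       | Answer x \<Rightarrow> 0))"
  have "prob_hist p S v (h @ [b]) = (\<Prod>i<Suc (length h). g i)" by (simp add: prob_hist_def g_def)
  also have "\<dots> = (\<Prod>i<length h. g i) * g (length h)"
    by (rule prod.lessThan_Suc)
  also have "(\<Prod>i<length h. g i) = prob_hist p S v h"
    unfolding prob_hist_def g_def by (rule prod.cong) (auto simp: nth_append split: action.split)
  also have "g (length h) = (case S h of Ask q \<Rightarrow> (if b = correct_answer v q then 1 - p else p) | Answer x \<Rightarrow> 0)"
    by (simp add: g_def split: action.split)
  finally show ?thesis .
qed

lemma prob_hist_Nil[simp]: "prob_hist p S v [] = 1"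
  by (simp add: prob_hist_def)

lemma finite_len: "finite {h :: bool list. length h = k}"
  using finite_lists_length_eq[of "UNIV :: bool set" k] by simp

lemma len_Suc_split:
  "{h :: bool list. length h = Suc k} =
     (\<lambda>h. h @ [True]) ` {h. length h = k} \<union> (\<lambda>h. h @ [False]) ` {h. length h = k}"
proof (rule set_eqI)
  fix h :: "bool list"
  show "h \<in> {h. length h = Suc k} \<longleftrightarrow> h \<in> (\<lambda>h. h @ [True]) ` {h. length h = k} \<union> (\<lambda>h. h @ [False]) ` {h. length h = k}"
  proof
    assume "h \<in> {h. length h = Suc k}"
    then obtain y ys where "h = ys @ [y]" "length ys = k" by (auto simp: length_Suc_conv_rev)
    then show "h \<in> (\<lambda>h. h @ [True]) ` {h. length h = k} \<union> (\<lambda>h. h @ [False]) ` {h. length h = k}"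
      by (cases y) auto
  qed auto
qed

lemma sum_len_Suc:
  "(\<Sum>h\<in>{h :: bool list. length h = Suc k}. F h) =
   (\<Sum>h\<in>{h. length h = k}. F (h @ [True]) + F (h @ [False]))"
proof -
  let ?L = "{h :: bool list. length h = k}"
  have d: "(\<lambda>h. h @ [True]) ` ?L \<inter> (\<lambda>h. h @ [False]) ` ?L = {}" by auto
  have "(\<Sum>h\<in>{h :: bool list. length h = Suc k}. F h) =
        (\<Sum>h\<in>(\<lambda>h. h @ [True]) ` ?L. F h) + (\<Sum>h\<in>(\<lambda>h. h @ [False]) ` ?L. F h)"
    unfolding len_Suc_split by (rule sum.union_disjoint) (auto simp: finite_len)
  also have "\<dots> = (\<Sum>h\<in>?L. F (h @ [True])) + (\<Sum>h\<in>?L. F (h @ [False]))"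
    by (subst sum.reindex, simp add: inj_on_def, subst sum.reindex, auto simp: inj_on_def)
  finally show ?thesis by (simp add: sum.distrib)
qed

lemma len0: "{h :: bool list. length h = 0} = {[]}" by auto

lemma upd_nonneg: "0 < p \<Longrightarrow> p < 1 \<Longrightarrow> 0 \<le> w x \<Longrightarrow> 0 \<le> upd p q b w x"
  by (simp add: upd_def)

lemma Wt_upd_sum: "Wt n (upd p q True w) + Wt n (upd p q False w) = Wt n w"
  unfolding Wt_def upd_def sum.distrib[symmetric]
  by (rule sum.cong) (auto simp: algebra_simps)

lemma Wt_upd_ge:
  assumes "0 < p" "p < 1/2" "\<forall>x\<in>{1..n}. 0 \<le> w x"
  shows "p * Wt n w \<le> Wt n (upd p q b w)"
  unfolding Wt_def upd_def sum_distrib_left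
proof (rule sum_mono)
  fix x assume "x \<in> {1..n}"
  then have "0 \<le> w x" using assms by auto
  then show "p * w x \<le> w x * (if b = (x < q) then 1 - p else p)"
    using assms mult_left_mono[of p "1-p" "w x"] by (auto simp: algebra_simps)
qed

lemma med_facts:
  assumes "\<forall>x\<in>{1..n}. 0 \<le> w x" "0 < Wt n w"
  shows "1 \<le> med n w" "med n w \<le> n"
        "2 * (\<Sum>x\<in>{1..<med n w}. w x) < Wt n w"
        "Wt n w \<le> 2 * (\<Sum>x\<in>{1..med n w}. w x)"
proof -
  let ?P = "\<lambda>m. Wt n w \<le> 2 * (\<Sum>x\<in>{1..m}. w x)"
  have Pn: "?P n" using assms by (simp add: Wt_def)
  show "med n w \<le> n" unfolding med_def by (rule Least_le) (rule Pn)
  show P: "?P (med n w)" unfolding med_def by (rule LeastI) (rule Pn)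
  have nP0: "\<not> ?P 0" using assms by simp
  show m1: "1 \<le> med n w"
    using P nP0 by (cases "med n w") auto
  have "\<not> ?P (med n w - 1)"
    unfolding med_def by (rule not_less_Least) (use m1 in \<open>simp add: med_def\<close>)
  moreover have "{1..med n w - 1} = {1..<med n w}" using m1 by auto
  ultimately show "2 * (\<Sum>x\<in>{1..<med n w}. w x) < Wt n w" by simp
qed

lemma qry_range:
  assumes "\<forall>x\<in>{1..n}. 0 \<le> w x" "0 < Wt n w"
  shows "qry n w \<in> {1..n}"
  using med_facts[OF assms] by (auto simp: qry_def)

locale setting =
  fixes p \<delta> :: real and n :: nat and \<mu> :: "nat \<Rightarrow> real"
  assumes p0: "0 < p" and p1: "p < 1/2" and d0: "0 < \<delta>" and d1: "\<delta> < 1/2"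
    and n1: "1 \<le> n" and mu0: "\<forall>x\<in>{1..n}. 0 \<le> \<mu> x" and mu1: "(\<Sum>x\<in>{1..n}. \<mu> x) = 1"
begin

abbreviation "S \<equiv> alg p \<delta> n \<mu>"
abbreviation "w \<equiv> wt p n \<mu>"
abbreviation "W h \<equiv> Wt n (wt p n \<mu> h)"

lemma w_nonneg: "x \<in> {1..n} \<Longrightarrow> 0 \<le> w h x"
proof (induction h rule: rev_induct)
  case Nil then show ?case using mu0 by simp
next
  case (snoc b h) then show ?case using p0 p1 by (simp add: upd_nonneg)
qed

lemma W_pos: "0 < W h"
proof (induction h rule: rev_induct)
  case Nil then show ?case using mu1 by (simp add: Wt_def)
next
  case (snoc b h)
  have "p * W h \<le> W (h @ [b])"
    using Wt_upd_ge[OF p0 p1] w_nonneg by simp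
  moreover have "0 < p * W h" using p0 snoc by simp
  ultimately show ?case by linarith
qed

lemma W_snoc: "W (h @ [True]) + W (h @ [False]) = W h"
  by (simp add: Wt_upd_sum)

lemma S_Ask: "is_Ask (S h) \<longleftrightarrow> \<not> stops \<delta> n (w h)"
  by (simp add: alg_def is_Ask_def)

lemma S_Ask_eq: "\<not> stops \<delta> n (w h) \<Longrightarrow> S h = Ask (qry n (w h))"
  by (simp add: alg_def)

lemma S_Ask_range: "S h = Ask q \<Longrightarrow> q \<in> {1..n}"
  using qry_range[of n "w h"] w_nonneg W_pos by (auto simp: alg_def split: if_splits)

lemma S_Answer:
  assumes "stops \<delta> n (w h)"
  obtains x where "x \<in> {1..n}" "S h = Answer x" "(1 - \<delta>) * W h \<le> w h x"
proof -
  let ?P = "\<lambda>x. x \<in> {1..n} \<and> (1 - \<delta>) * W h \<le> w h x"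
  from assms obtain x0 where "?P x0" by (auto simp: stops_def)
  then have "?P (LEAST x. ?P x)" by (rule LeastI)
  then show ?thesis using that assms by (auto simp: alg_def)
qed

lemma link: "\<mu> v * prob_hist p S v h = (if reach S h then w h v else 0)"
proof (induction h rule: rev_induct)
  case Nil then show ?case by simp
next
  case (snoc b h)
  show ?case
  proof (cases "reach S h \<and> is_Ask (S h)")
    case True
    then have "S h = Ask (qry n (w h))" using S_Ask S_Ask_eq by blast
    then show ?thesis using snoc True
      by (simp add: prob_hist_snoc reach_snoc upd_def correct_answer_def algebra_simps)
  next
    case False
    then show ?thesis
    proof (cases "reach S h")
      case True
      with False have "\<not> is_Ask (S h)" by simp
      then obtain x where "S h = Answer x" by (cases "S h") (auto simp: is_Ask_def)
      then show ?thesis using snoc by (simp add: prob_hist_snoc reach_snoc is_Ask_def)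
    next
      case False
      then show ?thesis using snoc
        by (simp add: prob_hist_snoc reach_snoc mult.assoc[symmetric])
    qed
  qed
qed

end

lemma log2_le_lin: "0 < a \<Longrightarrow> log 2 a \<le> (2*a - 1) / ln 2 - 1"
proof -
  assume a: "0 < a"
  have "ln (2*a) \<le> 2*a - 1" using a by (intro ln_le_minus_one) simp
  moreover have "ln (2*a) = ln 2 + ln a" using a by (simp add: ln_mult)
  ultimately have "ln a \<le> 2*a - 1 - ln 2" by simp
  then have "ln a / ln 2 \<le> (2*a - 1 - ln 2) / ln 2" by (simp add: divide_right_mono)
  also have "\<dots> = (2*a - 1) / ln 2 - 1" by (simp add: diff_divide_distrib)
  finally show ?thesis by (simp add: log_def)
qed

lemma drift1:
  fixes p w Os Od :: real
  assumes p0: "0 < p" and p1: "p < 1/2" and w0: "0 \<le> w" and s0: "0 \<le> Os" and d0: "0 \<le> Od"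
    and O0: "0 < Os + Od"
  shows "w * (capacity p - 2*(1-2*p)^2/ln 2 * (Os/(Os+Od) - 1/2)) \<le>
    (1-p)*w*(log 2 ((1-p)*w) - log 2 ((1-p)*Os + p*Od)) + p*w*(log 2 (p*w) - log 2 (p*Os + (1-p)*Od))
     - w*(log 2 w - log 2 (Os+Od))"
proof (cases "w = 0")
  case True then show ?thesis by simp
next
  case False
  with w0 have w: "0 < w" by simp
  define Ot where "Ot = Os + Od"
  define t where "t = Os / Ot"
  define a where "a = ((1-p)*Os + p*Od) / Ot"
  define b where "b = (p*Os + (1-p)*Od) / Ot"
  have Ot: "0 < Ot" using O0 by (simp add: Ot_def)
  have num_a: "0 < (1-p)*Os + p*Od"
  proof -
    have "0 < p*Os + p*Od" using p0 O0 by (simp add: distrib_left[symmetric])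
    moreover have "p*Os \<le> (1-p)*Os" using s0 p1 by (intro mult_right_mono) auto
    ultimately show ?thesis by linarith
  qed
  have num_b: "0 < p*Os + (1-p)*Od"
  proof -
    have "0 < p*Os + p*Od" using p0 O0 by (simp add: distrib_left[symmetric])
    moreover have "p*Od \<le> (1-p)*Od" using d0 p1 by (intro mult_right_mono) auto
    ultimately show ?thesis by linarith
  qed
  have a: "0 < a" using num_a Ot by (simp add: a_def)
  have b: "0 < b" using num_b Ot by (simp add: b_def)
  have ea: "(1-p)*Os + p*Od = a * Ot" using Ot by (simp add: a_def)
  have eb: "p*Os + (1-p)*Od = b * Ot" using Ot by (simp add: b_def)
  have l1: "log 2 ((1-p)*w) = log 2 (1-p) + log 2 w" using p1 w by (simp add: log_mult)
  have l2: "log 2 (p*w) = log 2 p + log 2 w" using p0 w by (simp add: log_mult)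
  have l3: "log 2 (a*Ot) = log 2 a + log 2 Ot" using a Ot by (simp add: log_mult)
  have l4: "log 2 (b*Ot) = log 2 b + log 2 Ot" using b Ot by (simp add: log_mult)
  have rhs: "(1-p)*w*(log 2 ((1-p)*w) - log 2 ((1-p)*Os + p*Od)) + p*w*(log 2 (p*w) - log 2 (p*Os + (1-p)*Od))
     - w*(log 2 w - log 2 (Os+Od)) = w * ((1-p)*log 2 (1-p) + p * log 2 p - (1-p)*log 2 a - p*log 2 b)"
    unfolding ea eb l1 l2 l3 l4 Ot_def[symmetric] by (simp add: algebra_simps)
  have la: "log 2 a \<le> (2*a - 1) / ln 2 - 1" using a by (rule log2_le_lin)
  have lb: "log 2 b \<le> (2*b - 1) / ln 2 - 1" using b by (rule log2_le_lin)
  have "(1-p)*log 2 a + p*log 2 b \<le> (1-p)*((2*a - 1) / ln 2 - 1) + p*((2*b - 1) / ln 2 - 1)"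
    using la lb p0 p1 by (intro add_mono mult_left_mono) auto
  also have "\<dots> = ((1-p)*(2*a-1) + p*(2*b-1)) / ln 2 - 1"
    by (simp add: field_simps)
  also have "(1-p)*(2*a-1) + p*(2*b-1) = (1-2*p)^2 * (2*t - 1)"
  proof -
    have t1: "1 - t = Od/Ot" using Ot by (simp add: t_def Ot_def field_simps)
    have ta: "a = (1-p)*t + p*(1-t)" unfolding t1 by (simp add: a_def t_def add_divide_distrib)
    have tb: "b = p*t + (1-p)*(1-t)" unfolding t1 by (simp add: b_def t_def add_divide_distrib)
    show ?thesis unfolding ta tb by (simp add: power2_eq_square algebra_simps)
  qed
  finally have key: "(1-p)*log 2 a + p*log 2 b \<le> (1-2*p)^2 * (2*t - 1) / ln 2 - 1" .
  have cap: "capacity p = 1 + p * log 2 p + (1-p) * log 2 (1-p)"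
    by (simp add: capacity_def bin_entropy_def)
  have "capacity p - 2*(1-2*p)^2/ln 2 * (Os/(Os+Od) - 1/2) =
        1 + p * log 2 p + (1-p) * log 2 (1-p) - (1-2*p)^2 * (2*t - 1) / ln 2"
    unfolding cap t_def Ot_def by (simp add: field_simps)
  also have "\<dots> \<le> (1-p)*log 2 (1-p) + p * log 2 p - (1-p)*log 2 a - p*log 2 b"
    using key by simp
  finally show ?thesis unfolding rhs using w by (simp add: mult_left_mono)
qed

lemma cap_pos:
  assumes p0: "0 < p" and p1: "p < 1/2"
  shows "0 < capacity p"
proof -
  have x: "0 < 1/(2*p) - 1" using p0 p1 by (simp add: field_simps)
  have "ln (1 + (1/(2*p) - 1)) < 1/(2*p) - 1" using x by (rule ln_add_one_self_less_self)
  then have "ln (1/(2*p)) < 1/(2*p) - 1" by simp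
  moreover have "ln (1/(2*p)) = - ln (2*p)" using p0 by (simp add: ln_div)
  ultimately have "- ln (2*p) < 1/(2*p) - 1" by simp
  then have "p * (- ln (2*p)) < p * (1/(2*p) - 1)" using p0 by (rule mult_strict_left_mono)
  also have "\<dots> = 1/2 - p" using p0 by (simp add: field_simps)
  finally have A: "-(1/2 - p) < p * ln (2*p)" by simp
  have "ln (1/(2*(1-p))) \<le> 1/(2*(1-p)) - 1" using p1 by (intro ln_le_minus_one) simp
  moreover have "ln (1/(2*(1-p))) = - ln (2*(1-p))" using p1 by (simp add: ln_div)
  ultimately have "- ln (2*(1-p)) \<le> 1/(2*(1-p)) - 1" by simp
  then have "(1-p) * (- ln (2*(1-p))) \<le> (1-p) * (1/(2*(1-p)) - 1)" using p1 by (intro mult_left_mono) auto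
  also have "\<dots> = p - 1/2" using p1 by (simp add: field_simps)
  finally have B: "1/2 - p \<le> (1-p) * ln (2*(1-p))" by simp
  have l1: "ln (2*p) = ln 2 + ln p" using p0 by (simp add: ln_mult)
  have l2: "ln (2*(1-p)) = ln 2 + ln (1-p)" using p1 ln_mult[of 2 "1-p"] by simp
  have "0 < p * ln (2*p) + (1-p) * ln (2*(1-p))" using A B by linarith
  also have "\<dots> = ln 2 + p * ln p + (1-p) * ln (1-p)" unfolding l1 l2 by (simp add: algebra_simps)
  also have "\<dots> = ln 2 * capacity p"
    by (simp add: capacity_def bin_entropy_def log_def field_simps)
  finally show ?thesis by (simp add: zero_less_mult_iff)
qed

lemma poly_ineq:
  fixes a r R :: real
  assumes a0: "0 \<le> a" and r0: "0 \<le> r" and rR: "r \<le> R" and R2: "2*R \<le> a + r + R" and pos: "0 < r + R"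
  shows "a*r/(r+R) + (r*(a+r) + R^2)/(a+r+R) \<le> (a+r+R)/2"
proof -
  define A where "A = R - r"
  define c where "c = a - R + r"
  have A0: "0 \<le> A" using rR by (simp add: A_def)
  have c0: "0 \<le> c" using R2 by (simp add: c_def)
  have aeq: "a = c + A" by (simp add: A_def c_def)
  have Req: "R = r + A" by (simp add: A_def)
  have W: "0 < a + r + R" using a0 pos by simp
  have id: "(r+R)*(a+r+R)^2 - 2*a*r*(a+r+R) - 2*(r+R)*(r*(a+r) + R^2) =
            4*r*A*c + 2*r*A^2 + A*c^2 + 4*A^2*c + 2*A^3"
    unfolding aeq Req by (simp add: algebra_simps power2_eq_square power3_eq_cube)
  have "0 \<le> 4*r*A*c + 2*r*A^2 + A*c^2 + 4*A^2*c + 2*A^3"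
    using r0 A0 c0 by simp
  then have main: "2*a*r*(a+r+R) + 2*(r+R)*(r*(a+r) + R^2) \<le> (r+R)*(a+r+R)^2"
    using id by linarith
  define Wv where "Wv = a + r + R"
  define X where "X = r*(a+r) + R^2"
  have W': "0 < Wv" using W by (simp add: Wv_def)
  have main': "2*(a*r*Wv + (r+R)*X) \<le> ((r+R)*Wv) * Wv"
    using main unfolding Wv_def[symmetric] X_def[symmetric] by (simp add: power2_eq_square algebra_simps)
  have eq: "a*r/(r+R) + X/Wv = (a*r*Wv + (r+R)*X) / ((r+R)*Wv)"
    using W' pos by (simp add: field_simps)
  have "(a*r*Wv + (r+R)*X) / ((r+R)*Wv) \<le> Wv/2"
    using main' W' pos by (simp add: pos_divide_le_eq mult_pos_pos mult_ac)
  then show ?thesis using eq unfolding Wv_def X_def by simp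
qed

definition Vp :: "nat \<Rightarrow> (nat \<Rightarrow> real) \<Rightarrow> real" where
  "Vp n u = (\<Sum>v\<in>{1..n}. u v * (log 2 (u v) - log 2 (Wt n u - u v)))"

lemma split3:
  fixes m n :: nat
  assumes "1 \<le> m" "m \<le> n"
  shows "(\<Sum>x\<in>{1..n}. f x) = (\<Sum>x\<in>{1..<m}. f x) + f m + (\<Sum>x\<in>{m<..n}. f x)"
proof -
  have "{1..n} = {1..<m} \<union> {m<..n} \<union> {m}" using assms by (auto simp: not_less)
  then have "(\<Sum>x\<in>{1..n}. f x) = (\<Sum>x\<in>{1..<m} \<union> {m<..n}. f x) + f m"
    by (simp add: sum.union_disjoint add.commute)
  also have "(\<Sum>x\<in>{1..<m} \<union> {m<..n}. f x) = (\<Sum>x\<in>{1..<m}. f x) + (\<Sum>x\<in>{m<..n}. f x)"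
    by (rule sum.union_disjoint) auto
  finally show ?thesis by (simp add: add_ac)
qed

lemma sum_bound:
  fixes w :: "nat \<Rightarrow> real"
  assumes w0: "\<forall>x\<in>{1..n}. 0 \<le> w x" and Wp: "0 < Wt n w" and run: "\<forall>x\<in>{1..n}. w x < Wt n w"
  defines "q \<equiv> qry n w"
  defines "SL \<equiv> sum w ({1..n} \<inter> {x. x < q})"
  defines "SR \<equiv> sum w ({1..n} \<inter> - {x. x < q})"
  shows "(\<Sum>v\<in>{1..n}. w v * (((if v < q then SL else SR) - w v) / (Wt n w - w v))) \<le> Wt n w / 2"
proof -
  define W where "W = Wt n w"
  define Sv where "Sv v = (if v < q then SL else SR)" for v
  define m where "m = med n w"
  define l where "l = (\<Sum>x\<in>{1..<m}. w x)"
  define g where "g = (\<Sum>x\<in>{m<..n}. w x)"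
  note mf = med_facts[OF w0 Wp, folded m_def]
  have m: "m \<in> {1..n}" using mf by auto
  have l0: "0 \<le> l" unfolding l_def using w0 mf by (intro sum_nonneg) auto
  have g0: "0 \<le> g" unfolding g_def using w0 mf by (intro sum_nonneg) auto
  have Wsplit: "W = l + w m + g" unfolding W_def Wt_def l_def g_def using split3[OF mf(1,2)] by simp
  have SL0: "0 \<le> SL" unfolding SL_def using w0 by (intro sum_nonneg) auto
  have SR0: "0 \<le> SR" unfolding SR_def using w0 by (intro sum_nonneg) auto
  have SLR: "SL + SR = W" unfolding SL_def SR_def W_def Wt_def
    by (subst sum.union_disjoint[symmetric]) (auto intro: sum.cong)
  have Sv_le: "Sv v \<le> W" for v using SL0 SR0 SLR by (simp add: Sv_def)
  have sq: "(\<Sum>v\<in>{1..n}. w v * Sv v) = SL^2 + SR^2"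
  proof -
    have "(\<Sum>v\<in>{1..n}. w v * Sv v) = (\<Sum>v\<in>{1..n}. if v < q then w v * SL else w v * SR)"
      by (rule sum.cong) (auto simp: Sv_def)
    also have "\<dots> = (\<Sum>v\<in>{1..n} \<inter> {x. x < q}. w v * SL) + (\<Sum>v\<in>{1..n} \<inter> - {x. x < q}. w v * SR)"
      by (rule sum.If_cases) simp
    also have "\<dots> = SL^2 + SR^2" by (simp add: SL_def SR_def sum_distrib_right[symmetric] power2_eq_square)
    finally show ?thesis .
  qed
  have pt: "w v * ((Sv v - w v) / (W - w v)) \<le> w v * Sv v / W" if v: "v \<in> {1..n}" for v
  proof -
    have wv: "0 \<le> w v" "w v < W" using w0 run v by (auto simp: W_def)
    have "(Sv v - w v) / (W - w v) \<le> Sv v / W"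
    proof -
      have "(Sv v - w v) * W \<le> Sv v * (W - w v)"
        using Sv_le[of v] wv by (simp add: algebra_simps mult_right_mono)
      then show ?thesis using wv Wp by (simp add: W_def divide_simps)
    qed
    then show ?thesis using wv by (metis mult_left_mono times_divide_eq_right)
  qed
  have "(\<Sum>v\<in>{1..n}. w v * ((Sv v - w v) / (W - w v))) =
        w m * ((Sv m - w m) / (W - w m)) + (\<Sum>v\<in>{1..n} - {m}. w v * ((Sv v - w v) / (W - w v)))"
    using m by (simp add: sum.remove)
  also have "(\<Sum>v\<in>{1..n} - {m}. w v * ((Sv v - w v) / (W - w v))) \<le> (\<Sum>v\<in>{1..n} - {m}. w v * Sv v / W)"
    by (rule sum_mono) (use pt in auto)
  also have "(\<Sum>v\<in>{1..n} - {m}. w v * Sv v / W) = (SL^2 + SR^2 - w m * Sv m) / W"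
    using m sq by (simp add: sum_divide_distrib[symmetric] sum_diff1)
  finally have tot: "(\<Sum>v\<in>{1..n}. w v * ((Sv v - w v) / (W - w v))) \<le>
      w m * ((Sv m - w m) / (W - w m)) + (SL^2 + SR^2 - w m * Sv m) / W" by simp
  have wm: "0 \<le> w m" "w m < W" using m w0 run by (auto simp: W_def)
  have lg_pos: "0 < l + g" using wm Wsplit by simp
  have lm: "(\<Sum>x\<in>{1..m}. w x) = l + w m"
  proof -
    have "{1..m} = insert m {1..<m}" using m by auto
    then show ?thesis by (simp add: l_def add.commute)
  qed
  have gW: "2*g \<le> w m + l + g" using mf(4) lm Wsplit by (simp add: W_def)
  have lW: "2*l \<le> w m + g + l" using mf(3) Wsplit by (simp add: W_def l_def)
  have final: "w m * ((Sv m - w m) / (W - w m)) + (SL^2 + SR^2 - w m * Sv m) / W \<le> W / 2"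
  proof (cases "l \<le> g \<and> m < n")
    case True
    then have qm: "q = m + 1" by (simp add: q_def qry_def m_def l_def g_def)
    have e1: "{1..n} \<inter> {x. x < q} = {1..<m} \<union> {m}" using qm m by auto
    have e2: "{1..n} \<inter> - {x. x < q} = {m<..n}" using qm m by auto
    have SLe: "SL = l + w m" unfolding SL_def e1 l_def by (simp add: sum.union_disjoint)
    have SRe: "SR = g" unfolding SR_def e2 g_def ..
    have Svm: "Sv m = SL" using qm by (simp add: Sv_def)
    have ineq: "w m * (l/(l+g)) + (l*(w m + l) + g^2)/(w m + l + g) \<le> (w m + l + g)/2"
      using poly_ineq[of "w m" l g] wm l0 True gW lg_pos by simp
    have e1: "w m * ((Sv m - w m) / (W - w m)) = w m * (l/(l+g))"
      using Svm SLe Wsplit by simp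
    have e2: "(SL^2 + SR^2 - w m * Sv m) / W = (l*(w m + l) + g^2)/(w m + l + g)"
      using Svm SLe SRe Wsplit by (simp add: power2_eq_square algebra_simps)
    have e3: "W / 2 = (w m + l + g)/2" using Wsplit by (simp add: add_ac)
    show ?thesis unfolding e1 e2 e3 by (rule ineq)
  next
    case False
    then have qm: "q = m" by (simp add: q_def qry_def m_def l_def g_def)
    have gl: "g \<le> l"
    proof (cases "m < n")
      case True then show ?thesis using False by simp
    next
      case False then have "m = n" using m by simp
      then show ?thesis using l0 by (simp add: g_def)
    qed
    have e1: "{1..n} \<inter> {x. x < q} = {1..<m}" using qm m by auto
    have e2: "{1..n} \<inter> - {x. x < q} = {m<..n} \<union> {m}" using qm m by auto
    have SLe: "SL = l" unfolding SL_def e1 l_def ..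
    have SRe: "SR = g + w m" unfolding SR_def e2 g_def by (simp add: sum.union_disjoint)
    have Svm: "Sv m = SR" using qm by (simp add: Sv_def)
    have ineq: "w m * (g/(g+l)) + (g*(w m + g) + l^2)/(w m + g + l) \<le> (w m + g + l)/2"
      using poly_ineq[of "w m" g l] wm g0 gl lW lg_pos by (simp add: add_ac)
    have e1: "w m * ((Sv m - w m) / (W - w m)) = w m * (g/(g+l))"
      using Svm SRe Wsplit by (simp add: add_ac)
    have e2: "(SL^2 + SR^2 - w m * Sv m) / W = (g*(w m + g) + l^2)/(w m + g + l)"
      using Svm SLe SRe Wsplit by (simp add: power2_eq_square algebra_simps)
    have e3: "W / 2 = (w m + g + l)/2" using Wsplit by (simp add: add_ac)
    show ?thesis unfolding e1 e2 e3 by (rule ineq)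
  qed
  from order.trans[OF tot final] show ?thesis by (simp only: Sv_def W_def)
qed

lemma drift:
  fixes w :: "nat \<Rightarrow> real"
  assumes p0: "0 < p" and p1: "p < 1/2"
    and w0: "\<forall>x\<in>{1..n}. 0 \<le> w x" and Wp: "0 < Wt n w" and run: "\<forall>x\<in>{1..n}. w x < Wt n w"
  defines "q \<equiv> qry n w"
  shows "Vp n w + capacity p * Wt n w \<le> Vp n (upd p q True w) + Vp n (upd p q False w)"
proof -
  define W where "W = Wt n w"
  define SL where "SL = sum w ({1..n} \<inter> {x. x < q})"
  define SR where "SR = sum w ({1..n} \<inter> - {x. x < q})"
  define Sv where "Sv v = (if v < q then SL else SR)" for v
  define uT where "uT = upd p q True w"
  define uF where "uF = upd p q False w"
  define \<kappa> where "\<kappa> = 2*(1-2*p)^2/ln 2"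
  have k0: "0 \<le> \<kappa>" by (simp add: \<kappa>_def)
  have SL0: "0 \<le> SL" unfolding SL_def using w0 by (intro sum_nonneg) auto
  have SR0: "0 \<le> SR" unfolding SR_def using w0 by (intro sum_nonneg) auto
  have SLR: "SL + SR = W" unfolding SL_def SR_def W_def Wt_def
    by (subst sum.union_disjoint[symmetric]) (auto intro: sum.cong)
  have WT: "Wt n uT = (1-p)*SL + p*SR"
  proof -
    have "Wt n uT = (\<Sum>x\<in>{1..n}. if x < q then (1-p) * w x else p * w x)"
      unfolding Wt_def uT_def upd_def by (rule sum.cong) auto
    also have "\<dots> = (\<Sum>x\<in>{1..n} \<inter> {x. x < q}. (1-p) * w x) + (\<Sum>x\<in>{1..n} \<inter> - {x. x < q}. p * w x)"
      by (rule sum.If_cases) simp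
    finally show ?thesis by (simp add: SL_def SR_def sum_distrib_left)
  qed
  have WF: "Wt n uF = p*SL + (1-p)*SR"
  proof -
    have "Wt n uF = (\<Sum>x\<in>{1..n}. if x < q then p * w x else (1-p) * w x)"
      unfolding Wt_def uF_def upd_def by (rule sum.cong) auto
    also have "\<dots> = (\<Sum>x\<in>{1..n} \<inter> {x. x < q}. p * w x) + (\<Sum>x\<in>{1..n} \<inter> - {x. x < q}. (1-p) * w x)"
      by (rule sum.If_cases) simp
    finally show ?thesis by (simp add: SL_def SR_def sum_distrib_left)
  qed
  have termv: "w v * (capacity p - \<kappa> * ((Sv v - w v)/(W - w v) - 1/2)) \<le>
     uT v * (log 2 (uT v) - log 2 (Wt n uT - uT v)) + uF v * (log 2 (uF v) - log 2 (Wt n uF - uF v))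
     - w v * (log 2 (w v) - log 2 (W - w v))" if v: "v \<in> {1..n}" for v
  proof -
    have wv: "0 \<le> w v" "w v < W" using v w0 run by (auto simp: W_def)
    show ?thesis
    proof (cases "v < q")
      case True
      define Os where "Os = SL - w v"
      define Od where "Od = SR"
      have "w v \<le> SL" unfolding SL_def using v True w0
        by (intro member_le_sum) auto
      then have Os0: "0 \<le> Os" by (simp add: Os_def)
      have Od0: "0 \<le> Od" using SR0 by (simp add: Od_def)
      have OO: "Os + Od = W - w v" using SLR by (simp add: Os_def Od_def)
      have pos: "0 < Os + Od" using OO wv by simp
      have e1: "uT v = (1-p) * w v" "uF v = p * w v" using True by (simp_all add: uT_def uF_def upd_def)
      have e2: "Wt n uT - uT v = (1-p)*Os + p*Od" "Wt n uF - uF v = p*Os + (1-p)*Od"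
        using WT WF e1 by (simp_all add: Os_def Od_def algebra_simps)
      have e3: "(Sv v - w v)/(W - w v) = Os/(Os+Od)" using True OO by (simp add: Sv_def Os_def)
      show ?thesis unfolding e2 e3 unfolding e1 OO[symmetric]
        using drift1[OF p0 p1 wv(1) Os0 Od0 pos] by (simp add: \<kappa>_def mult.assoc)
    next
      case False
      define Os where "Os = SR - w v"
      define Od where "Od = SL"
      have "w v \<le> SR" unfolding SR_def using v False w0
        by (intro member_le_sum) auto
      then have Os0: "0 \<le> Os" by (simp add: Os_def)
      have Od0: "0 \<le> Od" using SL0 by (simp add: Od_def)
      have OO: "Os + Od = W - w v" using SLR by (simp add: Os_def Od_def)
      have pos: "0 < Os + Od" using OO wv by simp
      have e1: "uT v = p * w v" "uF v = (1-p) * w v" using False by (simp_all add: uT_def uF_def upd_def)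
      have e2: "Wt n uT - uT v = p*Os + (1-p)*Od" "Wt n uF - uF v = (1-p)*Os + p*Od"
        using WT WF e1 by (simp_all add: Os_def Od_def algebra_simps)
      have e3: "(Sv v - w v)/(W - w v) = Os/(Os+Od)" using False OO by (simp add: Sv_def Os_def)
      show ?thesis unfolding e2 e3 unfolding e1 OO[symmetric]
        using drift1[OF p0 p1 wv(1) Os0 Od0 pos] by (simp add: \<kappa>_def mult.assoc algebra_simps)
    qed
  qed
  have sb: "(\<Sum>v\<in>{1..n}. w v * ((Sv v - w v) / (W - w v))) \<le> W / 2"
    using sum_bound[OF w0 Wp run] unfolding Sv_def W_def SL_def SR_def q_def .
  have "capacity p * W \<le> capacity p * W + \<kappa> * (W/2 - (\<Sum>v\<in>{1..n}. w v * ((Sv v - w v) / (W - w v))))"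
    using sb k0 by simp
  also have "\<dots> = (\<Sum>v\<in>{1..n}. w v * (capacity p - \<kappa> * ((Sv v - w v)/(W - w v) - 1/2)))"
    by (simp add: W_def Wt_def algebra_simps sum_distrib_left sum_distrib_right sum_subtractf sum.distrib
                  sum_divide_distrib[symmetric])
  also have "\<dots> \<le> (\<Sum>v\<in>{1..n}. uT v * (log 2 (uT v) - log 2 (Wt n uT - uT v)) + uF v * (log 2 (uF v) - log 2 (Wt n uF - uF v))
     - w v * (log 2 (w v) - log 2 (W - w v)))"
    by (rule sum_mono) (rule termv)
  also have "\<dots> = Vp n uT + Vp n uF - Vp n w"
    by (simp add: Vp_def W_def sum.distrib sum_subtractf)
  finally show ?thesis by (simp add: W_def uT_def uF_def)
qed

lemma term_bound:
  fixes a b K :: real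
  assumes a: "0 < a" and b: "0 < b" and K: "a / b \<le> K"
  shows "a * (log 2 a - log 2 b) \<le> a * log 2 K"
proof -
  have "log 2 a - log 2 b = log 2 (a / b)" using a b by (simp add: log_divide)
  also have "\<dots> \<le> log 2 K" using K a b by (intro log_mono) (auto simp: divide_pos_pos)
  finally show ?thesis using a by (simp add: mult_left_mono)
qed

lemma Vp_bound_run:
  fixes w :: "nat \<Rightarrow> real"
  assumes w0: "\<forall>x\<in>{1..n}. 0 \<le> w x" and Wp: "0 < Wt n w"
    and run: "\<forall>x\<in>{1..n}. w x < (1 - \<delta>) * Wt n w" and d0: "0 < \<delta>" and d1: "\<delta> < 1/2"
    and B: "log 2 ((1-\<delta>)/\<delta>) \<le> B"
  shows "Vp n w \<le> B * Wt n w"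
proof -
  have "Vp n w \<le> (\<Sum>v\<in>{1..n}. B * w v)"
    unfolding Vp_def
  proof (rule sum_mono)
    fix v assume v: "v \<in> {1..n}"
    show "w v * (log 2 (w v) - log 2 (Wt n w - w v)) \<le> B * w v"
    proof (cases "w v = 0")
      case True then show ?thesis by simp
    next
      case False
      then have wv: "0 < w v" using w0 v by force
      have lt: "w v < (1-\<delta>) * Wt n w" using run v by auto
      have "(1-\<delta>) * Wt n w \<le> Wt n w" using d0 Wp by (simp add: algebra_simps)
      then have Ob: "0 < Wt n w - w v" using lt by linarith
      have "w v / (Wt n w - w v) \<le> (1-\<delta>)/\<delta>"
      proof -
        have "\<delta> * w v \<le> (1-\<delta>) * (Wt n w - w v)" using lt by (simp add: algebra_simps)
        then have "w v \<le> ((1-\<delta>)/\<delta>) * (Wt n w - w v)" using d0 by (simp add: field_simps)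
        then show ?thesis using Ob by (simp add: pos_divide_le_eq)
      qed
      then have "w v * (log 2 (w v) - log 2 (Wt n w - w v)) \<le> w v * log 2 ((1-\<delta>)/\<delta>)"
        using term_bound wv Ob by blast
      also have "\<dots> \<le> w v * B" using B wv by (simp add: mult_left_mono)
      finally show ?thesis by (simp add: mult.commute)
    qed
  qed
  also have "\<dots> = B * Wt n w" by (simp add: Wt_def sum_distrib_left)
  finally show ?thesis .
qed

lemma Vp_bound_child:
  fixes w :: "nat \<Rightarrow> real"
  assumes p0: "0 < p" and p1: "p < 1/2"
    and w0: "\<forall>x\<in>{1..n}. 0 \<le> w x" and Wp: "0 < Wt n w"
    and run: "\<forall>x\<in>{1..n}. w x < (1 - \<delta>) * Wt n w" and d0: "0 < \<delta>" and d1: "\<delta> < 1/2"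
  shows "Vp n (upd p q b w) \<le> (log 2 ((1-\<delta>)/\<delta>) + log 2 ((1-p)/p)) * Wt n (upd p q b w)"
proof -
  define u where "u = upd p q b w"
  define B where "B = log 2 ((1-\<delta>)/\<delta>) + log 2 ((1-p)/p)"
  have "Vp n u \<le> (\<Sum>v\<in>{1..n}. B * u v)"
    unfolding Vp_def
  proof (rule sum_mono)
    fix v assume v: "v \<in> {1..n}"
    show "u v * (log 2 (u v) - log 2 (Wt n u - u v)) \<le> B * u v"
    proof (cases "w v = 0")
      case True then show ?thesis by (simp add: u_def upd_def)
    next
      case False
      then have wv: "0 < w v" using w0 v by force
      have lt: "w v < (1-\<delta>) * Wt n w" using run v by auto
      have "(1-\<delta>) * Wt n w \<le> Wt n w" using d0 Wp by (simp add: algebra_simps)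
      then have Ob: "0 < Wt n w - w v" using lt by linarith
      have uv: "p * w v \<le> u v" "u v \<le> (1-p) * w v" using p0 p1 wv
        by (auto simp: u_def upd_def mult_right_mono)
      have "0 < p * w v" using p0 wv by simp
      then have uvp: "0 < u v" using uv(1) by linarith
      have rest: "Wt n u - u v = (\<Sum>x\<in>{1..n} - {v}. u x)" "Wt n w - w v = (\<Sum>x\<in>{1..n} - {v}. w x)"
        using v by (simp_all add: Wt_def sum_diff1)
      have "p * (Wt n w - w v) \<le> Wt n u - u v"
        unfolding rest sum_distrib_left
      proof (rule sum_mono)
        fix x assume x: "x \<in> {1..n} - {v}"
        then have "0 \<le> w x" using w0 by auto
        moreover have "p * w x \<le> (1-p) * w x" using p1 \<open>0 \<le> w x\<close> by (intro mult_right_mono) auto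
        ultimately show "p * w x \<le> u x"
          by (auto simp: u_def upd_def mult.commute)
      qed
      moreover have "0 < p * (Wt n w - w v)" using p0 Ob by simp
      ultimately have Ou: "0 < Wt n u - u v" by linarith
      have r1: "w v / (Wt n w - w v) \<le> (1-\<delta>)/\<delta>"
      proof -
        have "\<delta> * w v \<le> (1-\<delta>) * (Wt n w - w v)" using lt by (simp add: algebra_simps)
        then have "w v \<le> ((1-\<delta>)/\<delta>) * (Wt n w - w v)" using d0 by (simp add: field_simps)
        then show ?thesis using Ob by (simp add: pos_divide_le_eq)
      qed
      have "u v / (Wt n u - u v) \<le> ((1-p) * w v) / (p * (Wt n w - w v))"
        using uv \<open>p * (Wt n w - w v) \<le> Wt n u - u v\<close> uvp Ou p0 Ob
        by (intro frac_le) auto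
      also have "\<dots> = ((1-p)/p) * (w v / (Wt n w - w v))" by simp
      also have "\<dots> \<le> ((1-p)/p) * ((1-\<delta>)/\<delta>)" using r1 p0 p1 by (intro mult_left_mono) auto
      finally have "u v * (log 2 (u v) - log 2 (Wt n u - u v)) \<le> u v * log 2 (((1-p)/p) * ((1-\<delta>)/\<delta>))"
        using term_bound uvp Ou by blast
      also have "log 2 (((1-p)/p) * ((1-\<delta>)/\<delta>)) = B"
      proof -
        have "0 < (1-p)/p" "0 < (1-\<delta>)/\<delta>" using p0 p1 d0 d1 by auto
        then show ?thesis unfolding B_def by (subst log_mult) (auto simp: add.commute)
      qed
      finally show ?thesis by (simp add: mult.commute)
    qed
  qed
  also have "\<dots> = B * Wt n u" by (simp add: Wt_def sum_distrib_left)
  finally show ?thesis by (simp add: u_def B_def)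
qed

context setting begin

abbreviation L :: "nat \<Rightarrow> bool list set" where "L k \<equiv> {h. length h = k}"

definition run :: "nat \<Rightarrow> real" where
  "run k = (\<Sum>h\<in>L k. if reach S h \<and> is_Ask (S h) then W h else 0)"
definition stopm :: "nat \<Rightarrow> real" where
  "stopm k = (\<Sum>h\<in>L k. if reach S h \<and> \<not> is_Ask (S h) then W h else 0)"
definition reachm :: "nat \<Rightarrow> real" where
  "reachm k = (\<Sum>h\<in>L k. if reach S h then W h else 0)"
definition Vr :: "nat \<Rightarrow> real" where
  "Vr k = (\<Sum>h\<in>L k. if reach S h then Vp n (w h) else 0)"
definition Vs :: "nat \<Rightarrow> real" where
  "Vs k = (\<Sum>h\<in>L k. if reach S h \<and> \<not> is_Ask (S h) then Vp n (w h) else 0)"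
definition Vrun :: "nat \<Rightarrow> real" where
  "Vrun k = (\<Sum>h\<in>L k. if reach S h \<and> is_Ask (S h) then Vp n (w h) else 0)"

lemma run_nonneg: "0 \<le> run k"
  unfolding run_def using W_pos by (intro sum_nonneg) (auto simp: less_imp_le)

lemma stopm_nonneg: "0 \<le> stopm k"
  unfolding stopm_def using W_pos by (intro sum_nonneg) (auto simp: less_imp_le)

lemma reachm_split: "reachm k = run k + stopm k"
  unfolding reachm_def run_def stopm_def sum.distrib[symmetric] by (rule sum.cong) auto

lemma Vr_split: "Vr k = Vrun k + Vs k"
  unfolding Vr_def Vrun_def Vs_def sum.distrib[symmetric] by (rule sum.cong) auto

lemma reachm_0: "reachm 0 = 1"
  unfolding reachm_def len0 using mu1 by (simp add: Wt_def)

lemma reachm_Suc: "reachm (Suc k) = run k"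
  unfolding reachm_def run_def sum_len_Suc
  by (rule sum.cong) (auto simp: reach_snoc W_snoc[symmetric])

lemma mass: "reachm K + (\<Sum>k<K. stopm k) = 1"
proof (induction K)
  case 0 then show ?case by (simp add: reachm_0)
next
  case (Suc K)
  then show ?case using reachm_Suc[of K] reachm_split[of K] by simp
qed

lemma running_facts:
  assumes "is_Ask (S h)"
  shows "\<forall>x\<in>{1..n}. w h x < (1 - \<delta>) * W h" "\<forall>x\<in>{1..n}. w h x < W h"
proof -
  have ns: "\<not> stops \<delta> n (w h)" using assms S_Ask by simp
  then show A: "\<forall>x\<in>{1..n}. w h x < (1 - \<delta>) * W h" by (auto simp: stops_def not_le)
  have "(1 - \<delta>) * W h \<le> W h" using d0 W_pos[of h] by (simp add: algebra_simps)
  then show "\<forall>x\<in>{1..n}. w h x < W h" using A by (meson less_le_trans)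
qed

lemma Vr_Suc: "Vrun k + capacity p * run k \<le> Vr (Suc k)"
proof -
  have "Vrun k + capacity p * run k =
        (\<Sum>h\<in>L k. if reach S h \<and> is_Ask (S h) then Vp n (w h) + capacity p * W h else 0)"
    unfolding Vrun_def run_def sum_distrib_left sum.distrib[symmetric] by (rule sum.cong) auto
  also have "\<dots> \<le> (\<Sum>h\<in>L k. if reach S h \<and> is_Ask (S h) then Vp n (w (h @ [True])) + Vp n (w (h @ [False])) else 0)"
  proof (rule sum_mono)
    fix h assume "h \<in> L k"
    show "(if reach S h \<and> is_Ask (S h) then Vp n (w h) + capacity p * W h else 0)
      \<le> (if reach S h \<and> is_Ask (S h) then Vp n (w (h @ [True])) + Vp n (w (h @ [False])) else 0)"
    proof (cases "reach S h \<and> is_Ask (S h)")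
      case True
      have "Vp n (w h) + capacity p * W h \<le>
            Vp n (upd p (qry n (w h)) True (w h)) + Vp n (upd p (qry n (w h)) False (w h))"
        using drift[OF p0 p1, of n "w h"] w_nonneg W_pos running_facts(2)[of h] True by auto
      then show ?thesis using True by simp
    qed auto
  qed
  also have "\<dots> = Vr (Suc k)"
    unfolding Vr_def sum_len_Suc by (rule sum.cong) (auto simp: reach_snoc)
  finally show ?thesis .
qed

lemma chain: "Vr 0 + capacity p * (\<Sum>k<K. run k) \<le> Vr K + (\<Sum>k<K. Vs k)"
proof (induction K)
  case 0 then show ?case by simp
next
  case (Suc K)
  have "Vr 0 + capacity p * (\<Sum>k<Suc K. run k) = Vr 0 + capacity p * (\<Sum>k<K. run k) + capacity p * run K"
    by (simp add: algebra_simps)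
  also have "\<dots> \<le> Vr K + (\<Sum>k<K. Vs k) + capacity p * run K" using Suc by simp
  also have "\<dots> = Vrun K + capacity p * run K + (\<Sum>k<Suc K. Vs k)" using Vr_split[of K] by simp
  also have "\<dots> \<le> Vr (Suc K) + (\<Sum>k<Suc K. Vs k)" using Vr_Suc[of K] by simp
  finally show ?case .
qed

definition B :: real where "B = log 2 ((1-\<delta>)/\<delta>) + log 2 ((1-p)/p)"

lemma B_ge: "log 2 ((1-\<delta>)/\<delta>) \<le> B"
proof -
  have "1 \<le> (1-p)/p" using p0 p1 by (simp add: field_simps)
  then have "0 \<le> log 2 ((1-p)/p)" by simp
  then show ?thesis by (simp add: B_def)
qed

lemma node_bound:
  assumes root: "is_Ask (S [])" and r: "reach S h"
  shows "Vp n (w h) \<le> B * W h"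
proof (cases "is_Ask (S h)")
  case True
  show ?thesis using Vp_bound_run[OF _ _ running_facts(1)[OF True] d0 d1 B_ge] w_nonneg W_pos by auto
next
  case False
  have "h \<noteq> []" using False root by auto
  then obtain g b where h: "h = g @ [b]" by (metis rev_exhaust)
  then have g: "reach S g" "is_Ask (S g)" using r by (auto simp: reach_snoc)
  show ?thesis unfolding h wt_snoc B_def
    using Vp_bound_child[OF p0 p1 _ _ running_facts(1)[OF g(2)] d0 d1] w_nonneg W_pos by auto
qed

lemma run_bound:
  assumes root: "is_Ask (S [])"
  shows "capacity p * (\<Sum>k<K. run k) \<le> B - Vp n \<mu>"
proof -
  have "Vr K \<le> B * reachm K"
    unfolding Vr_def reachm_def sum_distrib_left
    by (rule sum_mono) (use node_bound[OF root] in auto)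
  moreover have "(\<Sum>k<K. Vs k) \<le> (\<Sum>k<K. B * stopm k)"
    unfolding Vs_def stopm_def sum_distrib_left
    by (intro sum_mono) (use node_bound[OF root] in auto)
  moreover have "Vr 0 = Vp n \<mu>" unfolding Vr_def len0 by simp
  ultimately have "capacity p * (\<Sum>k<K. run k) \<le> B * (reachm K + (\<Sum>k<K. stopm k)) - Vp n \<mu>"
    using chain[of K] by (simp add: algebra_simps sum_distrib_left)
  then show ?thesis using mass[of K] by simp
qed

lemma run_zero:
  assumes root: "\<not> is_Ask (S [])"
  shows "run k = 0"
proof (cases k)
  case 0 then show ?thesis using root by (simp add: run_def len0)
next
  case (Suc j)
  have "\<not> reach S h" if "length h = Suc j" for h
    using root that by (auto simp: reach_def)
  then show ?thesis unfolding run_def Suc by (intro sum.neutral) auto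
qed

end

lemma ennreal_swap:
  fixes c :: "nat \<Rightarrow> real" and g :: "nat \<Rightarrow> nat \<Rightarrow> real"
  assumes I: "finite I" and c: "\<forall>v\<in>I. 0 \<le> c v" and g: "\<And>v k. v \<in> I \<Longrightarrow> 0 \<le> g v k"
  shows "(\<Sum>v\<in>I. ennreal (c v) * (\<Sum>k. ennreal (g v k))) = (\<Sum>k. ennreal (\<Sum>v\<in>I. c v * g v k))"
proof -
  have "(\<Sum>v\<in>I. ennreal (c v) * (\<Sum>k. ennreal (g v k))) = (\<Sum>v\<in>I. \<Sum>k. ennreal (c v * g v k))"
  proof (rule sum.cong)
    fix v assume v: "v \<in> I"
    have "ennreal (c v) * (\<Sum>k. ennreal (g v k)) = (\<Sum>k. ennreal (c v) * ennreal (g v k))"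
      by (rule ennreal_suminf_cmult[symmetric])
    also have "\<dots> = (\<Sum>k. ennreal (c v * g v k))"
      using c g v by (simp add: ennreal_mult)
    finally show "ennreal (c v) * (\<Sum>k. ennreal (g v k)) = (\<Sum>k. ennreal (c v * g v k))" .
  qed simp
  also have "\<dots> = (\<Sum>k. \<Sum>v\<in>I. ennreal (c v * g v k))"
    by (rule suminf_sum[symmetric]) (rule summableI)
  also have "\<dots> = (\<Sum>k. ennreal (\<Sum>v\<in>I. c v * g v k))"
    using c g by (subst sum_ennreal) (auto)
  finally show ?thesis .
qed

lemma ennreal_suminf_le_real:
  fixes r :: "nat \<Rightarrow> real"
  assumes "\<And>k. 0 \<le> r k" "\<And>K. (\<Sum>k<K. r k) \<le> M"
  shows "(\<Sum>k. ennreal (r k)) \<le> ennreal M"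
proof -
  have "(\<Sum>k. ennreal (r k)) + 0 \<le> ennreal M"
  proof (rule ennreal_suminf_bound_add)
    fix N
    have "(\<Sum>k<N. ennreal (r k)) = ennreal (\<Sum>k<N. r k)" using assms(1) by (simp add: sum_ennreal)
    also have "\<dots> \<le> ennreal M" using assms(2) by (rule ennreal_leI)
    finally show "(\<Sum>k<N. ennreal (r k)) + 0 \<le> ennreal M" by simp
  qed
  then show ?thesis by simp
qed

context setting begin

lemma ph_nonneg: "0 \<le> prob_hist p S v h"
  unfolding prob_hist_def using p0 p1
  by (intro prod_nonneg) (auto split: action.split)

lemma pm_nonneg: "0 \<le> prob_more_than p S v k"
  unfolding prob_more_than_def using ph_nonneg by (intro sum_nonneg) auto

lemma pm_sum: "(\<Sum>v\<in>{1..n}. \<mu> v * prob_more_than p S v k) = run k"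
proof -
  have "(\<Sum>v\<in>{1..n}. \<mu> v * prob_more_than p S v k) =
        (\<Sum>v\<in>{1..n}. \<Sum>h\<in>L k. if is_Ask (S h) then \<mu> v * prob_hist p S v h else 0)"
    unfolding prob_more_than_def sum_distrib_left by (intro sum.cong) auto
  also have "\<dots> = (\<Sum>h\<in>L k. \<Sum>v\<in>{1..n}. if is_Ask (S h) then \<mu> v * prob_hist p S v h else 0)"
    by (rule sum.swap)
  also have "\<dots> = run k"
    unfolding run_def by (intro sum.cong) (auto simp: link Wt_def cong: if_cong)
  finally show ?thesis .
qed

definition sp :: "nat \<Rightarrow> nat \<Rightarrow> real" where
  "sp v k = (\<Sum>h\<in>L k. if S h = Answer v then prob_hist p S v h else 0)"

lemma sp_nonneg: "0 \<le> sp v k"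
  unfolding sp_def using ph_nonneg by (intro sum_nonneg) auto

lemma succ_sum: "(1 - \<delta>) * stopm k \<le> (\<Sum>v\<in>{1..n}. \<mu> v * sp v k)"
proof -
  have "(\<Sum>v\<in>{1..n}. \<mu> v * sp v k) =
        (\<Sum>v\<in>{1..n}. \<Sum>h\<in>L k. if S h = Answer v then \<mu> v * prob_hist p S v h else 0)"
    unfolding sp_def sum_distrib_left by (intro sum.cong) auto
  also have "\<dots> = (\<Sum>h\<in>L k. \<Sum>v\<in>{1..n}. if S h = Answer v then \<mu> v * prob_hist p S v h else 0)"
    by (rule sum.swap)
  finally have eq: "(\<Sum>v\<in>{1..n}. \<mu> v * sp v k) =
     (\<Sum>h\<in>L k. \<Sum>v\<in>{1..n}. if S h = Answer v then (if reach S h then w h v else 0) else 0)"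
    by (simp add: link cong: if_cong)
  have "(1 - \<delta>) * stopm k = (\<Sum>h\<in>L k. if reach S h \<and> \<not> is_Ask (S h) then (1 - \<delta>) * W h else 0)"
    unfolding stopm_def sum_distrib_left by (intro sum.cong) auto
  also have "\<dots> \<le> (\<Sum>h\<in>L k. \<Sum>v\<in>{1..n}. if S h = Answer v then (if reach S h then w h v else 0) else 0)"
  proof (rule sum_mono)
    fix h assume "h \<in> L k"
    show "(if reach S h \<and> \<not> is_Ask (S h) then (1 - \<delta>) * W h else 0)
          \<le> (\<Sum>v\<in>{1..n}. if S h = Answer v then (if reach S h then w h v else 0) else 0)"
    proof (cases "reach S h \<and> \<not> is_Ask (S h)")
      case True
      then have "stops \<delta> n (w h)" using S_Ask by simp
      then obtain x where x: "x \<in> {1..n}" "S h = Answer x" "(1 - \<delta>) * W h \<le> w h x"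
        by (rule S_Answer)
      have "(\<Sum>v\<in>{1..n}. if S h = Answer v then (if reach S h then w h v else 0) else 0) = w h x"
        using x True by (simp add: sum.delta)
      then show ?thesis using True x by simp
    next
      case False
      have "0 \<le> (\<Sum>v\<in>{1..n}. if S h = Answer v then (if reach S h then w h v else 0) else 0)"
        using w_nonneg by (intro sum_nonneg) auto
      then show ?thesis using False by auto
    qed
  qed
  finally show ?thesis using eq by simp
qed

lemma entropy_bound:
  assumes root: "is_Ask (S [])"
  shows "- Vp n \<mu> \<le> entropy n \<mu>"
proof -
  have W1: "Wt n \<mu> = 1" using mu1 by (simp add: Wt_def)
  have lt: "\<forall>x\<in>{1..n}. \<mu> x < (1 - \<delta>) * 1" using running_facts(1)[OF root] W1 by simp
  have "- Vp n \<mu> = (\<Sum>v\<in>{1..n}. - (\<mu> v * (log 2 (\<mu> v) - log 2 (1 - \<mu> v))))"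
    unfolding Vp_def W1 by (simp add: sum_negf)
  also have "\<dots> \<le> (\<Sum>v\<in>{1..n}. \<mu> v * log 2 (1 / \<mu> v))"
  proof (rule sum_mono)
    fix v assume v: "v \<in> {1..n}"
    show "- (\<mu> v * (log 2 (\<mu> v) - log 2 (1 - \<mu> v))) \<le> \<mu> v * log 2 (1 / \<mu> v)"
    proof (cases "\<mu> v = 0")
      case True then show ?thesis by simp
    next
      case False
      then have mv: "0 < \<mu> v" using mu0 v by force
      have "\<mu> v < 1 - \<delta>" using lt v by auto
      then have m1: "\<mu> v < 1" using d0 by linarith
      have "log 2 (1 - \<mu> v) \<le> 0" using m1 mv by simp
      moreover have "log 2 (1 / \<mu> v) = - log 2 (\<mu> v)" using mv by (simp add: log_divide)
      ultimately show ?thesis using mv by (simp add: algebra_simps mult_left_mono mult_nonneg_nonpos)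
    qed
  qed
  finally show ?thesis by (simp add: entropy_def)
qed

lemma main:
  defines "C \<equiv> 1 + log 2 ((1-p)/p)"
  shows "(\<forall>h q. S h = Ask q \<longrightarrow> q \<in> {1..n}) \<and>
         (\<Sum>v\<in>{1..n}. ennreal (\<mu> v) * expected_queries p S v)
            \<le> ennreal ((entropy n \<mu> + C * \<bar>entropy2 n \<mu>\<bar> + C * log 2 (1 / \<delta>)) / capacity p) \<and>
         (\<Sum>v\<in>{1..n}. ennreal (\<mu> v) * success_prob p S v) \<ge> ennreal (1 - \<delta>)"
proof -
  define T where "T = (entropy n \<mu> + C * \<bar>entropy2 n \<mu>\<bar> + C * log 2 (1 / \<delta>)) / capacity p"
  have cap: "0 < capacity p" using cap_pos[OF p0 p1] .
  obtain M where Mb: "\<And>K. (\<Sum>k<K. run k) \<le> M" and MT: "ennreal M \<le> ennreal T"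
  proof (cases "is_Ask (S [])")
    case True
    define M where "M = (B - Vp n \<mu>) / capacity p"
    have "\<And>K. (\<Sum>k<K. run k) \<le> M"
      unfolding M_def using run_bound[OF True] cap by (simp add: pos_le_divide_eq mult.commute)
    moreover have "M \<le> T"
    proof -
      have lp: "0 \<le> log 2 ((1-p)/p)"
      proof -
        have "1 \<le> (1-p)/p" using p0 p1 by (simp add: field_simps)
        then show ?thesis by simp
      qed
      have ld: "1 \<le> log 2 (1/\<delta>)"
      proof -
        have "2 \<le> 1/\<delta>" using d0 d1 by (simp add: field_simps)
        then have "log 2 2 \<le> log 2 (1/\<delta>)" by (intro log_mono) auto
        then show ?thesis by simp
      qed
      have lb: "log 2 ((1-\<delta>)/\<delta>) \<le> log 2 (1/\<delta>)"
        using d0 d1 by (intro log_mono) (auto simp: divide_right_mono)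
      have "log 2 ((1-p)/p) \<le> log 2 ((1-p)/p) * log 2 (1/\<delta>)"
        using lp ld by (simp add: mult_le_cancel_left1)
      then have "B \<le> C * log 2 (1/\<delta>)" using lb by (simp add: B_def C_def algebra_simps)
      moreover have "0 \<le> C * \<bar>entropy2 n \<mu>\<bar>" using lp by (simp add: C_def)
      moreover have "- Vp n \<mu> \<le> entropy n \<mu>" by (rule entropy_bound[OF True])
      ultimately have "B - Vp n \<mu> \<le> entropy n \<mu> + C * \<bar>entropy2 n \<mu>\<bar> + C * log 2 (1 / \<delta>)" by linarith
      then show ?thesis unfolding M_def T_def using cap by (simp add: divide_right_mono)
    qed
    ultimately show ?thesis using that ennreal_leI by blast
  next
    case False
    have "\<And>K. (\<Sum>k<K. run k) \<le> 0" using run_zero[OF False] by simp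
    then show ?thesis using that[of 0] by simp
  qed
  have part1: "\<forall>h q. S h = Ask q \<longrightarrow> q \<in> {1..n}" using S_Ask_range by blast
  have part2: "(\<Sum>v\<in>{1..n}. ennreal (\<mu> v) * expected_queries p S v) \<le> ennreal T"
  proof -
    have "(\<Sum>v\<in>{1..n}. ennreal (\<mu> v) * expected_queries p S v) =
          (\<Sum>k. ennreal (\<Sum>v\<in>{1..n}. \<mu> v * prob_more_than p S v k))"
      unfolding expected_queries_def using mu0 pm_nonneg by (intro ennreal_swap) auto
    also have "\<dots> = (\<Sum>k. ennreal (run k))" using pm_sum by simp
    also have "\<dots> \<le> ennreal M" using run_nonneg Mb by (rule ennreal_suminf_le_real)
    finally show ?thesis using MT by simp
  qed
  have part3: "ennreal (1 - \<delta>) \<le> (\<Sum>v\<in>{1..n}. ennreal (\<mu> v) * success_prob p S v)"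
  proof -
    have sr: "summable run" using run_nonneg Mb by (intro summableI_nonneg_bounded) auto
    then have "run \<longlonglongrightarrow> 0" by (rule summable_LIMSEQ_zero)
    then have "(\<lambda>K. reachm (Suc K)) \<longlonglongrightarrow> 0" by (simp add: reachm_Suc)
    then have "reachm \<longlonglongrightarrow> 0" by (rule LIMSEQ_imp_Suc)
    then have "(\<lambda>K. 1 - reachm K) \<longlonglongrightarrow> 1 - 0" by (intro tendsto_intros)
    moreover have "(\<lambda>K. 1 - reachm K) = (\<lambda>K. \<Sum>k<K. stopm k)" using mass by (auto simp: algebra_simps)
    ultimately have "stopm sums 1" by (simp add: sums_def)
    then have s1: "(\<lambda>k. (1 - \<delta>) * stopm k) sums ((1 - \<delta>) * 1)" by (rule sums_mult)
    have nn: "\<And>k. 0 \<le> (1 - \<delta>) * stopm k" using stopm_nonneg d1 by simp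
    have "ennreal (1 - \<delta>) = (\<Sum>k. ennreal ((1 - \<delta>) * stopm k))"
      using suminf_ennreal_eq[OF nn s1] by simp
    also have "\<dots> \<le> (\<Sum>k. ennreal (\<Sum>v\<in>{1..n}. \<mu> v * sp v k))"
      by (intro suminf_le summableI ennreal_leI succ_sum)
    also have "\<dots> = (\<Sum>v\<in>{1..n}. ennreal (\<mu> v) * (\<Sum>k. ennreal (sp v k)))"
      using mu0 sp_nonneg by (intro ennreal_swap[symmetric]) auto
    also have "\<dots> = (\<Sum>v\<in>{1..n}. ennreal (\<mu> v) * success_prob p S v)"
      by (simp add: success_prob_def sp_def)
    finally show ?thesis .
  qed
  show ?thesis using part1 part2 part3 by (simp add: T_def)
qed

end

theorem theorem5:
  fixes p :: real
  assumes "0 < p" and "p < 1/2"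
  shows "\<exists>C>0. \<forall>\<delta>::real. 0 < \<delta> \<and> \<delta> < 1/2 \<longrightarrow>
     (\<exists>A :: nat \<Rightarrow> (nat \<Rightarrow> real) \<Rightarrow> bool list \<Rightarrow> action.
       \<forall>n \<mu>. n \<ge> 1 \<and> (\<forall>x\<in>{1..n}. \<mu> x \<ge> 0) \<and> (\<Sum>x\<in>{1..n}. \<mu> x) = 1 \<longrightarrow>
         (\<forall>h q. A n \<mu> h = Ask q \<longrightarrow> q \<in> {1..n}) \<and>
         (\<Sum>v\<in>{1..n}. ennreal (\<mu> v) * expected_queries p (A n \<mu>) v)
            \<le> ennreal ((entropy n \<mu> + C * \<bar>entropy2 n \<mu>\<bar> + C * log 2 (1 / \<delta>)) / capacity p) \<and>
         (\<Sum>v\<in>{1..n}. ennreal (\<mu> v) * success_prob p (A n \<mu>) v) \<ge> ennreal (1 - \<delta>))"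
proof -
  define C where "C = 1 + log 2 ((1-p)/p)"
  have "1 \<le> (1-p)/p" using assms by (simp add: field_simps)
  then have C0: "0 < C" by (simp add: C_def add_pos_nonneg)
  show ?thesis
  proof (intro exI[of _ C] conjI allI impI)
    show "0 < C" by (rule C0)
  next
    fix \<delta> :: real assume d: "0 < \<delta> \<and> \<delta> < 1/2"
    show "\<exists>A :: nat \<Rightarrow> (nat \<Rightarrow> real) \<Rightarrow> bool list \<Rightarrow> action.
       \<forall>n \<mu>. n \<ge> 1 \<and> (\<forall>x\<in>{1..n}. \<mu> x \<ge> 0) \<and> (\<Sum>x\<in>{1..n}. \<mu> x) = 1 \<longrightarrow>
         (\<forall>h q. A n \<mu> h = Ask q \<longrightarrow> q \<in> {1..n}) \<and>
         (\<Sum>v\<in>{1..n}. ennreal (\<mu> v) * expected_queries p (A n \<mu>) v)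
            \<le> ennreal ((entropy n \<mu> + C * \<bar>entropy2 n \<mu>\<bar> + C * log 2 (1 / \<delta>)) / capacity p) \<and>
         (\<Sum>v\<in>{1..n}. ennreal (\<mu> v) * success_prob p (A n \<mu>) v) \<ge> ennreal (1 - \<delta>)"
    proof (intro exI[of _ "\<lambda>n \<mu>. alg p \<delta> n \<mu>"] allI impI)
      fix n :: nat and \<mu> :: "nat \<Rightarrow> real"
      assume H: "n \<ge> 1 \<and> (\<forall>x\<in>{1..n}. \<mu> x \<ge> 0) \<and> (\<Sum>x\<in>{1..n}. \<mu> x) = 1"
      interpret setting p \<delta> n \<mu> using assms d H by unfold_locales auto
      show "(\<forall>h q. alg p \<delta> n \<mu> h = Ask q \<longrightarrow> q \<in> {1..n}) \<and>
         (\<Sum>v\<in>{1..n}. ennreal (\<mu> v) * expected_queries p (alg p \<delta> n \<mu>) v)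
            \<le> ennreal ((entropy n \<mu> + C * \<bar>entropy2 n \<mu>\<bar> + C * log 2 (1 / \<delta>)) / capacity p) \<and>
         (\<Sum>v\<in>{1..n}. ennreal (\<mu> v) * success_prob p (alg p \<delta> n \<mu>) v) \<ge> ennreal (1 - \<delta>)"
        using main unfolding C_def .
    qed
  qed
qed

end
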